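(* Let $I$ be an interval with $1\in I\subset\,]0,\infty[$. Let $\lambda,\mu,\tilde\mu\in C^1(I\times\mathbb{R})$ be $1$-periodic in $r$ with $\dot\lambda\in C^1(I\times\mathbb{R})$, and let $\psi\in C^1(\mathbb{R})$, $\overset{\circ}{\phi}\in C^2(\mathbb{R})$ be $1$-periodic; write $\overset{\circ}{\lambda}=\lambda(1,\cdot)$, $\overset{\circ}{\mu}=\mu(1,\cdot)$. Define $D^{\pm}=e^{-\mu}\partial_t\pm e^{-\lambda}\partial_r$ and $$\tilde a=\Big(-\dot\lambda-\frac1t\Big)e^{-\mu}-\tilde\mu e^{-\lambda},\quad b=-\frac{e^{-\mu}}{t},\quad \tilde c=\Big(-\dot\lambda-\frac1t\Big)e^{-\mu}+\tilde\mu e^{-\lambda},$$ $$b_1=\Big(-2\dot\lambda-\frac1t\Big)e^{-\mu}-(\tilde\mu+\mu')e^{-\lambda},\quad b_2=-\frac{e^{-\mu}}{t},\quad b_3=-\dot\lambda'e^{-\mu-\lambda}+(\lambda'\tilde\mu-\tilde\mu\mu'-\tilde\mu')e^{-2\lambda},$$ $$b_4=\Big(-2\dot\lambda-\frac1t\Big)e^{-\mu}+(\tilde\mu+\mu')e^{-\lambda},\quad b_5=-\dot\lambda'e^{-\mu-\lambda}-(\lambda'\tilde\mu-\tilde\mu\mu'-\tilde\mu')e^{-2\lambda}.$$ Let $X,Y\in C^1(I\times\mathbb{R})$ be $1$-periodic in $r$ and solve $D^+X=\tilde aX+bY$, $D^-Y=bX+\tilde cY$ with $X(1,r)=e^{-\overset{\circ}{\mu}(r)}\psi(r)-e^{-\overset{\circ}{\lambda}(r)}\overset{\circ}{\phi}'(r)$,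 $Y(1,r)=e^{-\overset{\circ}{\mu}(r)}\psi(r)+e^{-\overset{\circ}{\lambda}(r)}\overset{\circ}{\phi}'(r)$. Let $X_1,Y_1\in C^1(I\times\mathbb{R})$ be $1$-periodic in $r$ and solve $$D^+X_1=b_1X_1+b_2Y_1+b_3X,\qquad D^-Y_1=b_2X_1+b_4Y_1+b_5Y$$ with $X_1(1,\cdot)=e^{-\lambda(1,\cdot)}\partial_rX(1,\cdot)$ and $Y_1(1,\cdot)=e^{-\lambda(1,\cdot)}\partial_rY(1,\cdot)$. Set $K(t)=\sup_{r}(X^2+Y^2)^{1/2}(t,r)$ and $$A_0=2\sup_{r\in\mathbb{R}}\Big[(|\psi'|+|\overset{\circ}{\mu}'||\psi|)e^{-\overset{\circ}{\mu}-\overset{\circ}{\lambda}}+(|\overset{\circ}{\phi}''|+|\overset{\circ}{\lambda}'||\overset{\circ}{\phi}'|)e^{-2\overset{\circ}{\lambda}}\Big](r),\qquad A(t)=\sup_{r\in\mathbb{R}}\big(X_1^2+Y_1^2\big)^{1/2}(t,r),$$ $$v(t)=\sup_{r}\Big(\frac2t+2|\dot\lambda|+(|\tilde\mu|+|\mu'|)e^{\mu-\lambda}\Big)(t,r),\quad h(t)=\sup_r\Big[|\dot\lambda'|e^{-\lambda}+(|\mu'||\tilde\mu|+|\lambda'||\tilde\mu|+|\tilde\mu'|)e^{\mu-2\lambda}\Big](t,r).$$ Then for $t\in I$ with $t\le 1$, $$A(t)\le A_0+3\int_t^1\big(v(s)A(s)+h(s)K(s)\big)\,ds,$$ and for $t\in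 I$ with $t\ge1$ the same estimate holds with $\int_t^1$ replaced by $\int_1^t$.
   Context: A dot denotes $\partial_t$ and a prime denotes $\partial_r$. All functions of $(t,r)$ are periodic in $r$ with period 1. *)

theory Defs
  imports "HOL-Analysis.Analysis"
begin

text \<open>Functions of (t,r) are modelled as real => real => real, first argument t.\<close>

text \<open>Partial derivative in t (dot), taken within the interval I (one-sided at endpoints).\<close>
definition dtI :: "real set \<Rightarrow> (real \<Rightarrow> real \<Rightarrow> real) \<Rightarrow> real \<Rightarrow> real \<Rightarrow> real" where
  "dtI I f t r = vector_derivative (\<lambda>s. f s r) (at t within I)"

definition dr :: "(real \<Rightarrow> real \<Rightarrow> real) \<Rightarrow> real \<Rightarrow> real \<Rightarrow> real" where
  "dr f t r = deriv (\<lambda>x. f t x) r"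

definition C1_on :: "real set \<Rightarrow> (real \<Rightarrow> real \<Rightarrow> real) \<Rightarrow> bool" where
  "C1_on I f \<longleftrightarrow>
     (\<forall>t\<in>I. \<forall>r. (\<lambda>s. f s r) differentiable (at t within I) \<and> (\<lambda>x. f t x) differentiable (at r)) \<and>
     continuous_on (I \<times> UNIV) (\<lambda>(t,r). f t r) \<and>
     continuous_on (I \<times> UNIV) (\<lambda>(t,r). dtI I f t r) \<and>
     continuous_on (I \<times> UNIV) (\<lambda>(t,r). dr f t r)"

definition C1_real :: "(real \<Rightarrow> real) \<Rightarrow> bool" where
  "C1_real g \<longleftrightarrow> (\<forall>x. g differentiable (at x)) \<and> continuous_on UNIV (deriv g)"

definition C2_real :: "(real \<Rightarrow> real) \<Rightarrow> bool" where
  "C2_real g \<longleftrightarrow> (\<forall>x. g differentiable (at x)) \<and> (\<forall>x. deriv g differentiable (at x))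
      \<and> continuous_on UNIV (deriv (deriv g))"

definition periodic_r :: "real set \<Rightarrow> (real \<Rightarrow> real \<Rightarrow> real) \<Rightarrow> bool" where
  "periodic_r I f \<longleftrightarrow> (\<forall>t\<in>I. \<forall>r. f t (r + 1) = f t r)"

definition periodic1 :: "(real \<Rightarrow> real) \<Rightarrow> bool" where
  "periodic1 g \<longleftrightarrow> (\<forall>r. g (r + 1) = g r)"

end

theory Submission
  imports Defs
begin


lemma per_nat: assumes "\<forall>r. g (r+1) = (g r::'a)" shows "g (r + real n) = g r"
proof (induction n)
  case 0 then show ?case by simp
next
  case (Suc n)
  have "g (r + real (Suc n)) = g ((r + real n) + 1)" by (simp add: algebra_simps)
  also have "\<dots> = g (r + real n)" using assms by blast
  finally show ?case using Suc by simp
qed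

lemma per_int: assumes "\<forall>r. g (r+1) = (g r::'a)" shows "g (r + real_of_int n) = g r"
proof (cases "n \<ge> 0")
  case True
  then obtain m where "n = int m" by (metis nonneg_eq_int)
  then show ?thesis using per_nat[OF assms] by simp
next
  case False
  then obtain m where m: "n = - int m" by (metis nle_le nonpos_int_cases)
  have "g (r + real_of_int n) = g ((r + real_of_int n) + real m)" using per_nat[OF assms] by simp
  also have "\<dots> = g r" using m by simp
  finally show ?thesis .
qed

lemma per_range: fixes g :: "real \<Rightarrow> 'a" assumes "\<forall>r. g (r+1) = g r" shows "range g = g ` {0..1}"
proof
  show "range g \<subseteq> g ` {0..1}"
  proof
    fix y assume "y \<in> range g"
    then obtain x where x: "y = g x" by auto
    have "g x = g ((x - of_int \<lfloor>x\<rfloor>) + of_int \<lfloor>x\<rfloor>)" by simp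
    also have "\<dots> = g (x - of_int \<lfloor>x\<rfloor>)" by (rule per_int[OF assms])
    finally have "y = g (x - of_int \<lfloor>x\<rfloor>)" using x by simp
    moreover have "x - of_int \<lfloor>x\<rfloor> \<in> {0..1}"
      using frac_ge_0[of x] frac_lt_1[of x] by (simp add: frac_def)
    ultimately show "y \<in> g ` {0..1}" by blast
  qed
qed auto

lemma per_attain:
  fixes g :: "real \<Rightarrow> real"
  assumes "continuous_on UNIV g" "\<forall>r. g (r+1) = g r"
  shows "bdd_above (range g)" "\<exists>r0\<in>{0..1}. \<forall>x. g x \<le> g r0"
proof -
  have c: "compact (g ` {0..1})"
    by (rule compact_continuous_image) (auto intro: continuous_on_subset[OF assms(1)])
  then show "bdd_above (range g)" using per_range[OF assms(2)] by (simp add: bounded_imp_bdd_above compact_imp_bounded)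
  obtain r0 where r0: "r0 \<in> {0..1}" "\<forall>y\<in>{0..1}. g y \<le> g r0"
  proof -
    have "continuous_on {0..1} g" using assms(1) by (rule continuous_on_subset) simp
    from continuous_attains_sup[OF compact_Icc _ this] show ?thesis using that by auto
  qed
  have "g x \<le> g r0" for x
  proof -
    have "g x \<in> g ` {0..1}" using per_range[OF assms(2)] by blast
    then obtain y where "y \<in> {0..1}" "g x = g y" by auto
    then show ?thesis using r0 by auto
  qed
  then show "\<exists>r0\<in>{0..1}. \<forall>x. g x \<le> g r0" using r0 by blast
qed

lemma per_deriv:
  fixes g :: "real \<Rightarrow> real"
  assumes "\<forall>r. g (r+1) = g r" "\<forall>x. g differentiable (at x)"
  shows "deriv g (r+1) = deriv g r"
proof -
  have "(g has_field_derivative deriv g (r+1)) (at (r+1))"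
    using assms(2) DERIV_deriv_iff_real_differentiable by blast
  then have "((\<lambda>x. g (x+1)) has_field_derivative deriv g (r+1)) (at r)"
    using DERIV_shift by blast
  moreover have "(\<lambda>x. g (x+1)) = g" using assms(1) by auto
  ultimately show ?thesis using DERIV_imp_deriv by fastforce
qed


lemma slice_cont:
  fixes f :: "real \<Rightarrow> real \<Rightarrow> real"
  assumes c: "continuous_on (J \<times> UNIV) (\<lambda>(t,r). f t r)" and t: "t \<in> J"
  shows "continuous_on UNIV (f t)"
proof -
  have "continuous_on UNIV (\<lambda>x. (\<lambda>(t,r). f t r) (t, x))"
    by (rule continuous_on_compose2[OF c]) (auto intro!: continuous_intros simp: t)
  then show ?thesis by simp
qed

lemma slice_sup:
  fixes f :: "real \<Rightarrow> real \<Rightarrow> real"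
  assumes c: "continuous_on (J \<times> UNIV) (\<lambda>(t,r). f t r)" and t: "t \<in> J"
    and per: "\<forall>r. f t (r+1) = f t r"
  shows "bdd_above (range (f t))" "\<And>x. f t x \<le> (SUP r. f t r)" "\<exists>r0\<in>{0..1}. (SUP r. f t r) = f t r0"
proof -
  note sc = slice_cont[OF c t]
  show b: "bdd_above (range (f t))" using per_attain(1)[OF sc per] .
  show "\<And>x. f t x \<le> (SUP r. f t r)" using b by (simp add: cSUP_upper)
  obtain r0 where r0: "r0\<in>{0..1}" "\<forall>x. f t x \<le> f t r0" using per_attain(2)[OF sc per] by blast
  have "(SUP r. f t r) = f t r0"
    by (rule antisym) (use r0 b in \<open>auto intro!: cSUP_least cSUP_upper\<close>)
  then show "\<exists>r0\<in>{0..1}. (SUP r. f t r) = f t r0" using r0 by blast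
qed

lemma sup_cont:
  fixes f :: "real \<Rightarrow> real \<Rightarrow> real"
  assumes c: "continuous_on ({a..b} \<times> UNIV) (\<lambda>(t,r). f t r)"
    and per: "\<forall>t\<in>{a..b}. \<forall>r. f t (r+1) = f t r"
  shows "continuous_on {a..b} (\<lambda>t. SUP r. f t r)"
proof -
  have uc: "uniformly_continuous_on ({a..b} \<times> {0..1}) (\<lambda>(t,r). f t r)"
    by (rule compact_uniformly_continuous) (auto intro: continuous_on_subset[OF c] compact_Times)
  show ?thesis unfolding continuous_on_iff
  proof (intro ballI allI impI)
    fix t e assume t: "t \<in> {a..b}" and e: "(0::real) < e"
    obtain d where d: "d > 0" and
      dd: "\<And>x x'. x \<in> {a..b} \<times> {0..1} \<Longrightarrow> x' \<in> {a..b} \<times> {0..1} \<Longrightarrow> dist x' x < d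
          \<Longrightarrow> dist ((\<lambda>(t,r). f t r) x') ((\<lambda>(t,r). f t r) x) < e/2"
      using uc e unfolding uniformly_continuous_on_def by (metis half_gt_zero)
    have near: "\<bar>f s r - f t' r\<bar> < e/2" if "s \<in> {a..b}" "t' \<in> {a..b}" "r \<in> {0..1}" "dist s t' < d" for s t' r
    proof -
      have "dist (s, r) (t', r) < d" using that by (simp add: dist_Pair_Pair)
      then have "dist ((\<lambda>(t,r). f t r) (s,r)) ((\<lambda>(t,r). f t r) (t',r)) < e/2"
        using that by (intro dd) auto
      then show ?thesis by (simp add: dist_real_def)
    qed
    show "\<exists>d>0. \<forall>x'\<in>{a..b}. dist x' t < d \<longrightarrow> dist (SUP r. f x' r) (SUP r. f t r) < e"
    proof (intro exI[of _ d] conjI ballI impI d)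
      fix s assume s: "s \<in> {a..b}" and ds: "dist s t < d"
      obtain rs where rs: "rs \<in> {0..1}" "(SUP r. f s r) = f s rs" using slice_sup(3)[OF c s] per s by blast
      obtain rt where rt: "rt \<in> {0..1}" "(SUP r. f t r) = f t rt" using slice_sup(3)[OF c t] per t by blast
      have u1: "f t rs \<le> (SUP r. f t r)" using slice_sup(2)[OF c t] per t by blast
      have u2: "f s rt \<le> (SUP r. f s r)" using slice_sup(2)[OF c s] per s by blast
      have n1: "\<bar>f s rs - f t rs\<bar> < e/2" using near[OF s t rs(1) ds] .
      have n2: "\<bar>f s rt - f t rt\<bar> < e/2" using near[OF s t rt(1) ds] .
      show "dist (SUP r. f s r) (SUP r. f t r) < e"
        unfolding dist_real_def using rs rt u1 u2 n1 n2 by linarith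
    qed
  qed
qed

lemma right_mono:
  fixes \<Psi> :: "real \<Rightarrow> real"
  assumes ab: "a \<le> b" and c: "continuous_on {a..b} \<Psi>"
    and loc: "\<forall>\<tau>\<in>{a..<b}. \<forall>\<epsilon>>0. \<exists>\<delta>>0. \<forall>s. \<tau> < s \<and> s < \<tau>+\<delta> \<and> s \<le> b \<longrightarrow> \<Psi> \<tau> - \<epsilon>*(s-\<tau>) \<le> \<Psi> s"
  shows "\<Psi> a \<le> \<Psi> b"
proof -
  have key: "\<Psi> a - \<epsilon>*(b-a) \<le> \<Psi> b" if \<epsilon>: "\<epsilon> > 0" for \<epsilon>
  proof -
    define S where "S = {x\<in>{a..b}. \<Psi> a - \<epsilon>*(x-a) \<le> \<Psi> x}"
    have cl: "closed S" unfolding S_def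
      by (rule continuous_on_closed_Collect_le) (auto intro!: continuous_intros c)
    have aS: "a \<in> S" using ab by (simp add: S_def)
    have bdd: "bdd_above S" unfolding S_def by (rule bdd_aboveI[of _ b]) auto
    define c where "c = Sup S"
    have "S \<noteq> {}" using aS by auto
    then have cS: "c \<in> S" unfolding c_def using closed_contains_Sup bdd cl by blast
    have cb: "c \<le> b" using cS by (simp add: S_def)
    have "c = b"
    proof (rule ccontr)
      assume "c \<noteq> b"
      with cb have cb': "c < b" by simp
      have ca: "a \<le> c" using cS by (simp add: S_def)
      obtain \<delta> where \<delta>: "\<delta> > 0" "\<forall>s. c < s \<and> s < c+\<delta> \<and> s \<le> b \<longrightarrow> \<Psi> c - \<epsilon>*(s-c) \<le> \<Psi> s"
        using loc cb' ca \<epsilon> by force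
      define s where "s = min (c + \<delta>/2) b"
      have s1: "c < s" "s < c+\<delta>" "s \<le> b" using \<delta> cb' by (auto simp: s_def)
      have "\<Psi> c - \<epsilon>*(s-c) \<le> \<Psi> s" using \<delta> s1 by blast
      moreover have "\<Psi> a - \<epsilon>*(c-a) \<le> \<Psi> c" using cS by (simp add: S_def)
      ultimately have "\<Psi> a - \<epsilon>*(s-a) \<le> \<Psi> s" by (simp add: algebra_simps)
      then have "s \<in> S" using s1 ca by (simp add: S_def)
      then have "s \<le> c" unfolding c_def using bdd by (rule cSup_upper)
      then show False using s1 by simp
    qed
    then show ?thesis using cS by (simp add: S_def)
  qed
  show ?thesis
  proof (rule field_le_epsilon)
    fix e :: real assume e: "e > 0"
    define \<epsilon> where "\<epsilon> = e / (b - a + 1)"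
    have \<epsilon>: "\<epsilon> > 0" using e ab by (simp add: \<epsilon>_def)
    have "\<epsilon> * (b - a) \<le> e"
    proof -
      have "\<epsilon> * (b - a) \<le> \<epsilon> * (b - a + 1)" using \<epsilon> by simp
      also have "\<dots> = e" using ab by (simp add: \<epsilon>_def)
      finally show ?thesis .
    qed
    then show "\<Psi> a \<le> \<Psi> b + e" using key[OF \<epsilon>] by linarith
  qed
qed

lemma left_mono:
  fixes \<Psi> :: "real \<Rightarrow> real"
  assumes ab: "a \<le> b" and c: "continuous_on {a..b} \<Psi>"
    and loc: "\<forall>\<tau>\<in>{a<..b}. \<forall>\<epsilon>>0. \<exists>\<delta>>0. \<forall>s. \<tau>-\<delta> < s \<and> s < \<tau> \<and> a \<le> s \<longrightarrow> \<Psi> \<tau> - \<epsilon>*(\<tau>-s) \<le> \<Psi> s"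
  shows "\<Psi> b \<le> \<Psi> a"
proof -
  have "(\<lambda>x. \<Psi> (- x)) (-b) \<le> (\<lambda>x. \<Psi> (- x)) (-a)"
  proof (rule right_mono[of "-b" "-a" "\<lambda>x. \<Psi> (- x)"])
    show "- b \<le> - a" using ab by simp
    show "continuous_on {- b..- a} (\<lambda>x. \<Psi> (- x))"
      by (rule continuous_on_compose2[OF c]) (auto intro!: continuous_intros)
    show "\<forall>\<tau>\<in>{- b..<- a}. \<forall>\<epsilon>>0. \<exists>\<delta>>0. \<forall>s. \<tau> < s \<and> s < \<tau> + \<delta> \<and> s \<le> - a \<longrightarrow>
             \<Psi> (- \<tau>) - \<epsilon> * (s - \<tau>) \<le> \<Psi> (- s)"
    proof (intro ballI allI impI)
      fix \<tau> \<epsilon> :: real assume t: "\<tau> \<in> {- b..<- a}" and e: "\<epsilon> > 0"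
      then have "- \<tau> \<in> {a<..b}" by auto
      then obtain \<delta> where \<delta>: "\<delta> > 0" "\<forall>s. -\<tau>-\<delta> < s \<and> s < -\<tau> \<and> a \<le> s \<longrightarrow> \<Psi> (-\<tau>) - \<epsilon>*(-\<tau>-s) \<le> \<Psi> s"
        using loc e by blast
      show "\<exists>\<delta>>0. \<forall>s. \<tau> < s \<and> s < \<tau> + \<delta> \<and> s \<le> - a \<longrightarrow> \<Psi> (- \<tau>) - \<epsilon> * (s - \<tau>) \<le> \<Psi> (- s)"
      proof (intro exI[of _ \<delta>] conjI allI impI \<delta>(1))
        fix s assume "\<tau> < s \<and> s < \<tau> + \<delta> \<and> s \<le> - a"
        then have "-\<tau>-\<delta> < -s \<and> -s < -\<tau> \<and> a \<le> -s" by auto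
        then have "\<Psi> (-\<tau>) - \<epsilon>*(-\<tau>-(-s)) \<le> \<Psi> (-s)" using \<delta>(2) by blast
        then show "\<Psi> (- \<tau>) - \<epsilon> * (s - \<tau>) \<le> \<Psi> (- s)" by (simp add: algebra_simps)
      qed
    qed
  qed
  then show ?thesis by simp
qed

lemma deriv_approx:
  fixes G :: "real \<Rightarrow> real"
  assumes "(G has_vector_derivative D) (at x within S)" "e > 0"
  shows "\<exists>d>0. \<forall>y\<in>S. \<bar>y - x\<bar> < d \<longrightarrow> \<bar>G y - G x - (y - x) * D\<bar> \<le> e * \<bar>y - x\<bar>"
  using assms unfolding has_vector_derivative_def has_derivative_within_alt by simp

lemma compare:
  fixes P G F :: "real \<Rightarrow> real"
  assumes ab: "a \<le> b" and cP: "continuous_on {a..b} P"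
    and dG: "\<forall>\<tau>\<in>{a..b}. (G has_vector_derivative F \<tau>) (at \<tau> within {a..b})"
    and loc: "\<forall>\<tau>\<in>{a..b}. \<forall>\<epsilon>>0. \<exists>\<delta>>0. \<forall>s\<in>{a..b}. \<bar>s-\<tau>\<bar> < \<delta> \<longrightarrow> P \<tau> - \<bar>s-\<tau>\<bar>*(F \<tau> + \<epsilon>) \<le> P s"
  shows "P a \<le> P b + (G b - G a)" "P b \<le> P a + (G b - G a)"
proof -
  have cG: "continuous_on {a..b} G"
    using dG by (meson continuous_on_eq_continuous_within has_vector_derivative_continuous)
  have both: "\<exists>\<delta>>0. \<forall>s\<in>{a..b}. \<bar>s-\<tau>\<bar> < \<delta> \<longrightarrow> P \<tau> - \<bar>s-\<tau>\<bar>*(F \<tau> + \<epsilon>/2) \<le> P s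
        \<and> \<bar>G s - G \<tau> - (s - \<tau>) * F \<tau>\<bar> \<le> \<epsilon>/2 * \<bar>s - \<tau>\<bar>"
    if t: "\<tau> \<in> {a..b}" and e: "\<epsilon> > 0" for \<tau> \<epsilon>
  proof -
    obtain d1 where d1: "d1 > 0" "\<forall>s\<in>{a..b}. \<bar>s-\<tau>\<bar> < d1 \<longrightarrow> P \<tau> - \<bar>s-\<tau>\<bar>*(F \<tau> + \<epsilon>/2) \<le> P s"
      using loc t e by (meson half_gt_zero)
    obtain d2 where d2: "d2 > 0" "\<forall>s\<in>{a..b}. \<bar>s - \<tau>\<bar> < d2 \<longrightarrow> \<bar>G s - G \<tau> - (s - \<tau>) * F \<tau>\<bar> \<le> \<epsilon>/2 * \<bar>s - \<tau>\<bar>"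
      using deriv_approx[OF dG[rule_format, OF t], of "\<epsilon>/2"] e by auto
    show ?thesis using d1 d2 by (intro exI[of _ "min d1 d2"]) auto
  qed
  have "(\<lambda>x. P x + G x) a \<le> (\<lambda>x. P x + G x) b"
  proof (rule right_mono[OF ab])
    show "continuous_on {a..b} (\<lambda>x. P x + G x)" by (intro continuous_intros cP cG)
    show "\<forall>\<tau>\<in>{a..<b}. \<forall>\<epsilon>>0. \<exists>\<delta>>0. \<forall>s. \<tau> < s \<and> s < \<tau> + \<delta> \<and> s \<le> b \<longrightarrow>
          P \<tau> + G \<tau> - \<epsilon> * (s - \<tau>) \<le> P s + G s"
    proof (intro ballI allI impI)
      fix \<tau> \<epsilon> :: real assume t: "\<tau> \<in> {a..<b}" and e: "\<epsilon> > 0"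
      then obtain \<delta> where \<delta>: "\<delta> > 0" "\<forall>s\<in>{a..b}. \<bar>s-\<tau>\<bar> < \<delta> \<longrightarrow> P \<tau> - \<bar>s-\<tau>\<bar>*(F \<tau> + \<epsilon>/2) \<le> P s
        \<and> \<bar>G s - G \<tau> - (s - \<tau>) * F \<tau>\<bar> \<le> \<epsilon>/2 * \<bar>s - \<tau>\<bar>" using both[of \<tau> \<epsilon>] by auto
      show "\<exists>\<delta>>0. \<forall>s. \<tau> < s \<and> s < \<tau> + \<delta> \<and> s \<le> b \<longrightarrow> P \<tau> + G \<tau> - \<epsilon> * (s - \<tau>) \<le> P s + G s"
      proof (intro exI[of _ \<delta>] conjI allI impI \<delta>(1))
        fix s assume s: "\<tau> < s \<and> s < \<tau> + \<delta> \<and> s \<le> b"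
        then have "s \<in> {a..b}" "\<bar>s-\<tau>\<bar> < \<delta>" using t by auto
        then have h: "P \<tau> - \<bar>s-\<tau>\<bar>*(F \<tau> + \<epsilon>/2) \<le> P s"
          "\<bar>G s - G \<tau> - (s - \<tau>) * F \<tau>\<bar> \<le> \<epsilon>/2 * \<bar>s - \<tau>\<bar>" using \<delta>(2) by auto
        have abs: "\<bar>s - \<tau>\<bar> = s - \<tau>" using s by simp
        have g: "G s - G \<tau> - (s - \<tau>) * F \<tau> \<ge> - (\<epsilon>/2 * (s - \<tau>))"
          using h(2) unfolding abs abs_le_iff by linarith
        have r: "(s-\<tau>)*(F \<tau> + \<epsilon>/2) = (s - \<tau>) * F \<tau> + \<epsilon>/2 * (s - \<tau>)" "\<epsilon> * (s - \<tau>) = \<epsilon>/2 * (s - \<tau>) + \<epsilon>/2 * (s - \<tau>)"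
          by (simp_all add: algebra_simps)
        show "P \<tau> + G \<tau> - \<epsilon> * (s - \<tau>) \<le> P s + G s"
        proof -
          have h1: "P \<tau> - \<bar>s-\<tau>\<bar>*(F \<tau> + \<epsilon>/2) \<le> P s" by (rule h(1))
          then show ?thesis using g r unfolding abs by linarith
        qed
      qed
    qed
  qed
  then show "P a \<le> P b + (G b - G a)" by simp
  have "(\<lambda>x. P x - G x) b \<le> (\<lambda>x. P x - G x) a"
  proof (rule left_mono[OF ab])
    show "continuous_on {a..b} (\<lambda>x. P x - G x)" by (intro continuous_intros cP cG)
    show "\<forall>\<tau>\<in>{a<..b}. \<forall>\<epsilon>>0. \<exists>\<delta>>0. \<forall>s. \<tau> - \<delta> < s \<and> s < \<tau> \<and> a \<le> s \<longrightarrow>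
          P \<tau> - G \<tau> - \<epsilon> * (\<tau> - s) \<le> P s - G s"
    proof (intro ballI allI impI)
      fix \<tau> \<epsilon> :: real assume t: "\<tau> \<in> {a<..b}" and e: "\<epsilon> > 0"
      then obtain \<delta> where \<delta>: "\<delta> > 0" "\<forall>s\<in>{a..b}. \<bar>s-\<tau>\<bar> < \<delta> \<longrightarrow> P \<tau> - \<bar>s-\<tau>\<bar>*(F \<tau> + \<epsilon>/2) \<le> P s
        \<and> \<bar>G s - G \<tau> - (s - \<tau>) * F \<tau>\<bar> \<le> \<epsilon>/2 * \<bar>s - \<tau>\<bar>" using both[of \<tau> \<epsilon>] by auto
      show "\<exists>\<delta>>0. \<forall>s. \<tau> - \<delta> < s \<and> s < \<tau> \<and> a \<le> s \<longrightarrow> P \<tau> - G \<tau> - \<epsilon> * (\<tau> - s) \<le> P s - G s"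
      proof (intro exI[of _ \<delta>] conjI allI impI \<delta>(1))
        fix s assume s: "\<tau> - \<delta> < s \<and> s < \<tau> \<and> a \<le> s"
        then have "s \<in> {a..b}" "\<bar>s-\<tau>\<bar> < \<delta>" using t by auto
        then have h: "P \<tau> - \<bar>s-\<tau>\<bar>*(F \<tau> + \<epsilon>/2) \<le> P s"
          "\<bar>G s - G \<tau> - (s - \<tau>) * F \<tau>\<bar> \<le> \<epsilon>/2 * \<bar>s - \<tau>\<bar>" using \<delta>(2) by auto
        have abs: "\<bar>s - \<tau>\<bar> = \<tau> - s" using s by simp
        define w where "w = \<epsilon> * (\<tau> - s)"
        define u where "u = (\<tau> - s) * F \<tau>"
        have g: "G s - G \<tau> + u \<le> w/2"
          using h(2) unfolding abs abs_le_iff u_def w_def by (simp add: algebra_simps)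
        have h1: "P \<tau> - u - w/2 \<le> P s"
          using h(1) unfolding abs u_def w_def by (simp add: algebra_simps)
        show "P \<tau> - G \<tau> - \<epsilon> * (\<tau> - s) \<le> P s - G s"
          using g h1 unfolding w_def[symmetric] by linarith
      qed
    qed
  qed
  then show "P b \<le> P a + (G b - G a)" by simp
qed


lemma sup_evol:
  fixes Z :: "real \<Rightarrow> real \<Rightarrow> real" and F :: "real \<Rightarrow> real"
  assumes ab: "a \<le> b" and sub: "{a..b} \<subseteq> I"
    and Zd: "\<forall>t\<in>I. \<forall>r. (\<lambda>s. Z s r) differentiable (at t within I) \<and> (\<lambda>x. Z t x) differentiable (at r)"
    and Zc: "continuous_on (I \<times> UNIV) (\<lambda>(t,r). Z t r)"
    and Zp: "periodic_r I Z"
    and Fc: "continuous_on {a..b} F"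
    and hD: "\<forall>\<tau>\<in>{a..b}. \<forall>r. dr Z \<tau> r = 0 \<longrightarrow> \<bar>dtI I Z \<tau> r\<bar> \<le> F \<tau>"
  shows "(SUP r. \<bar>Z a r\<bar>) \<le> (SUP r. \<bar>Z b r\<bar>) + integral {a..b} F"
        "(SUP r. \<bar>Z b r\<bar>) \<le> (SUP r. \<bar>Z a r\<bar>) + integral {a..b} F"
proof -
  define P where "P = (\<lambda>t. SUP r. \<bar>Z t r\<bar>)"
  define G where "G = (\<lambda>u. integral {a..u} F)"
  have eq: "(\<lambda>(t,r). \<bar>Z t r\<bar>) = (\<lambda>p. \<bar>(\<lambda>(t,r). Z t r) p\<bar>)" by auto
  have cA: "continuous_on ({a..b} \<times> UNIV) (\<lambda>(t,r). \<bar>Z t r\<bar>)"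
    unfolding eq by (intro continuous_intros continuous_on_subset[OF Zc]) (use sub in auto)
  have perA: "\<forall>t\<in>{a..b}. \<forall>r. \<bar>Z t (r+1)\<bar> = \<bar>Z t r\<bar>" using Zp sub by (auto simp: periodic_r_def)
  have cP: "continuous_on {a..b} P" unfolding P_def using sup_cont[OF cA perA] by simp
  have dG: "\<forall>\<tau>\<in>{a..b}. (G has_vector_derivative F \<tau>) (at \<tau> within {a..b})"
    unfolding G_def using integral_has_vector_derivative[OF Fc] by blast
  have up: "\<bar>Z t x\<bar> \<le> P t" if "t \<in> {a..b}" for t x
    using slice_sup(2)[OF cA that] perA that unfolding P_def by blast
  have loc: "\<forall>\<tau>\<in>{a..b}. \<forall>\<epsilon>>0. \<exists>\<delta>>0. \<forall>s\<in>{a..b}. \<bar>s-\<tau>\<bar> < \<delta> \<longrightarrow> P \<tau> - \<bar>s-\<tau>\<bar>*(F \<tau> + \<epsilon>) \<le> P s"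
  proof (intro ballI allI impI)
    fix \<tau> \<epsilon> :: real assume t: "\<tau> \<in> {a..b}" and e: "\<epsilon> > 0"
    have tI: "\<tau> \<in> I" using t sub by auto
    obtain r0 where r0: "P \<tau> = \<bar>Z \<tau> r0\<bar>"
      using slice_sup(3)[OF cA t] perA t unfolding P_def by auto
    have r0max: "\<bar>Z \<tau> x\<bar> \<le> \<bar>Z \<tau> r0\<bar>" for x using up[OF t, of x] r0 by simp
    have dZ: "(Z \<tau> has_real_derivative deriv (Z \<tau>) r0) (at r0)"
    proof -
      have "Z \<tau> differentiable (at r0)" using Zd tI by blast
      then show ?thesis by (simp add: DERIV_deriv_iff_real_differentiable)
    qed
    have dr0: "dr Z \<tau> r0 = 0"
    proof (cases "Z \<tau> r0 \<ge> 0")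
      case True
      have "Z \<tau> y \<le> Z \<tau> r0" for y
        using r0max[of y] True abs_ge_self[of "Z \<tau> y"] abs_of_nonneg[of "Z \<tau> r0"] by linarith
      then have "\<forall>y. \<bar>r0 - y\<bar> < 1 \<longrightarrow> Z \<tau> y \<le> Z \<tau> r0" by blast
      from DERIV_local_max[OF dZ _ this] show ?thesis by (simp add: dr_def)
    next
      case False
      have "Z \<tau> r0 \<le> Z \<tau> y" for y
        using r0max[of y] False abs_ge_minus_self[of "Z \<tau> y"] abs_of_neg[of "Z \<tau> r0"] by linarith
      then have "\<forall>y. \<bar>r0 - y\<bar> < 1 \<longrightarrow> Z \<tau> r0 \<le> Z \<tau> y" by blast
      from DERIV_local_min[OF dZ _ this] show ?thesis by (simp add: dr_def)
    qed
    define D where "D = dtI I Z \<tau> r0"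
    have DF: "\<bar>D\<bar> \<le> F \<tau>" using hD t dr0 unfolding D_def by blast
    have "((\<lambda>s. Z s r0) has_vector_derivative D) (at \<tau> within I)"
      unfolding D_def dtI_def using Zd tI vector_derivative_works by blast
    then have "((\<lambda>s. Z s r0) has_vector_derivative D) (at \<tau> within {a..b})"
      using has_vector_derivative_within_subset sub by blast
    from deriv_approx[OF this e] obtain d where d: "d > 0"
      "\<forall>s\<in>{a..b}. \<bar>s - \<tau>\<bar> < d \<longrightarrow> \<bar>Z s r0 - Z \<tau> r0 - (s - \<tau>) * D\<bar> \<le> \<epsilon> * \<bar>s - \<tau>\<bar>" by blast
    show "\<exists>\<delta>>0. \<forall>s\<in>{a..b}. \<bar>s-\<tau>\<bar> < \<delta> \<longrightarrow> P \<tau> - \<bar>s-\<tau>\<bar>*(F \<tau> + \<epsilon>) \<le> P s"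
    proof (intro exI[of _ d] conjI ballI impI d(1))
      fix s assume s: "s \<in> {a..b}" "\<bar>s-\<tau>\<bar> < d"
      have 1: "\<bar>Z s r0 - Z \<tau> r0 - (s - \<tau>) * D\<bar> \<le> \<epsilon> * \<bar>s - \<tau>\<bar>" using d(2) s by blast
      have 2: "\<bar>(s - \<tau>) * D\<bar> \<le> \<bar>s-\<tau>\<bar> * F \<tau>" unfolding abs_mult by (rule mult_left_mono[OF DF]) simp
      have 3: "\<bar>Z s r0\<bar> \<le> P s" using up[OF s(1)] .
      have 4: "\<bar>s-\<tau>\<bar>*(F \<tau> + \<epsilon>) = \<bar>s-\<tau>\<bar> * F \<tau> + \<epsilon> * \<bar>s - \<tau>\<bar>" by (simp add: algebra_simps)
      show "P \<tau> - \<bar>s-\<tau>\<bar>*(F \<tau> + \<epsilon>) \<le> P s" unfolding 4 r0 using 1 2 3 by linarith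
    qed
  qed
  note cmp = compare[OF ab cP dG loc]
  have Ga: "G a = 0" unfolding G_def by simp
  have Gb: "G b = integral {a..b} F" unfolding G_def by simp
  show "(SUP r. \<bar>Z a r\<bar>) \<le> (SUP r. \<bar>Z b r\<bar>) + integral {a..b} F"
    using cmp(1) unfolding Ga Gb P_def by simp
  show "(SUP r. \<bar>Z b r\<bar>) \<le> (SUP r. \<bar>Z a r\<bar>) + integral {a..b} F"
    using cmp(2) unfolding Ga Gb P_def by simp
qed




lemma per_dt:
  assumes "periodic_r I f" shows "periodic_r I (dtI I f)"
  unfolding periodic_r_def dtI_def
proof (intro ballI allI)
  fix t r assume t: "t \<in> I"
  show "vector_derivative (\<lambda>s. f s (r + 1)) (at t within I) = vector_derivative (\<lambda>s. f s r) (at t within I)"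
    by (rule vector_derivative_cong_eq) (use assms t in \<open>auto simp: periodic_r_def\<close>)
qed

lemma bound_abs:
  fixes M D B1 B2 B3 x1 y1 x V H Aa Kk :: real
  assumes eq: "exp (-M) * D = B1*x1 + B2*y1 + B3*x"
    and c12: "\<bar>exp M * B1\<bar> + \<bar>exp M * B2\<bar> \<le> V" and c3: "\<bar>exp M * B3\<bar> \<le> H"
    and x1: "\<bar>x1\<bar> \<le> Aa" and y1: "\<bar>y1\<bar> \<le> Aa" and x: "\<bar>x\<bar> \<le> Kk"
  shows "\<bar>D\<bar> \<le> V*Aa + H*Kk"
proof -
  have "D = exp M * (exp (-M) * D)" by (simp add: exp_minus field_simps)
  also have "\<dots> = (exp M * B1)*x1 + (exp M * B2)*y1 + (exp M * B3)*x" unfolding eq by (simp add: algebra_simps)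
  finally have D: "D = (exp M * B1)*x1 + (exp M * B2)*y1 + (exp M * B3)*x" .
  have Aa0: "Aa \<ge> 0" using x1 by linarith
  have K0: "Kk \<ge> 0" using x by linarith
  have "\<bar>D\<bar> \<le> \<bar>exp M * B1\<bar>*\<bar>x1\<bar> + \<bar>exp M * B2\<bar>*\<bar>y1\<bar> + \<bar>exp M * B3\<bar>*\<bar>x\<bar>"
  proof -
    have "\<bar>D\<bar> \<le> \<bar>(exp M * B1)*x1\<bar> + \<bar>(exp M * B2)*y1\<bar> + \<bar>(exp M * B3)*x\<bar>"
      unfolding D by (rule order_trans[OF abs_triangle_ineq add_mono[OF abs_triangle_ineq order_refl]])
    then show ?thesis by (simp add: abs_mult)
  qed
  also have "\<dots> \<le> \<bar>exp M * B1\<bar>*Aa + \<bar>exp M * B2\<bar>*Aa + \<bar>exp M * B3\<bar>*Kk"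
    by (intro add_mono mult_left_mono x1 y1 x) auto
  also have "\<dots> = (\<bar>exp M * B1\<bar> + \<bar>exp M * B2\<bar>)*Aa + \<bar>exp M * B3\<bar>*Kk" by (simp add: algebra_simps)
  also have "\<dots> \<le> V*Aa + H*Kk"
    by (intro add_mono mult_right_mono c12 c3 Aa0 K0)
  finally show ?thesis .
qed

lemma coef1:
  fixes t M L Ld Mt dM :: real and \<sigma> :: real
  assumes t: "t > 0" and s: "\<bar>\<sigma>\<bar> = 1"
  shows "\<bar>exp M * ((- 2 * Ld - 1/t) * exp (- M) + \<sigma> * ((Mt + dM) * exp (- L)))\<bar> + \<bar>exp M * (- exp (- M) / t)\<bar>
         \<le> 2 / t + 2 * \<bar>Ld\<bar> + (\<bar>Mt\<bar> + \<bar>dM\<bar>) * exp (M - L)"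
proof -
  have e1: "exp M * exp (-M) = 1" by (simp add: exp_minus)
  have e2: "exp M * exp (-L) = exp (M - L)" by (simp add: exp_diff exp_minus field_simps)
  have "exp M * ((- 2 * Ld - 1/t) * exp (- M) + \<sigma> * ((Mt + dM) * exp (- L)))
      = (- 2 * Ld - 1/t) * (exp M * exp (-M)) + \<sigma> * ((Mt + dM) * (exp M * exp (- L)))"
    by (simp add: algebra_simps)
  also have "\<dots> = (- 2 * Ld - 1/t) + \<sigma> * ((Mt + dM) * exp (M - L))" unfolding e1 e2 by simp
  finally have q1: "exp M * ((- 2 * Ld - 1/t) * exp (- M) + \<sigma> * ((Mt + dM) * exp (- L)))
      = (- 2 * Ld - 1/t) + \<sigma> * ((Mt + dM) * exp (M - L))" .
  have q2: "\<bar>exp M * (- exp (- M) / t)\<bar> = 1/t" using t by (simp add: exp_minus field_simps)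
  have a1: "\<bar>- 2 * Ld - 1/t\<bar> \<le> 2 * \<bar>Ld\<bar> + 1/t" using t by (simp add: abs_if)
  have a2: "\<bar>\<sigma> * ((Mt + dM) * exp (M - L))\<bar> \<le> (\<bar>Mt\<bar> + \<bar>dM\<bar>) * exp (M - L)"
    unfolding abs_mult s by (simp add: mult_right_mono abs_triangle_ineq)
  show ?thesis unfolding q1 q2 using a1 a2 abs_triangle_ineq[of "- 2 * Ld - 1/t" "\<sigma> * ((Mt + dM) * exp (M - L))"]
    by linarith
qed

lemma coef3:
  fixes M L dLd dL Mt dM dMt :: real and \<sigma> :: real
  assumes s: "\<bar>\<sigma>\<bar> = 1"
  shows "\<bar>exp M * (- dLd * exp (- M - L) + \<sigma> * ((dL * Mt - Mt * dM - dMt) * exp (- 2 * L)))\<bar>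
         \<le> \<bar>dLd\<bar> * exp (- L) + (\<bar>dM\<bar> * \<bar>Mt\<bar> + \<bar>dL\<bar> * \<bar>Mt\<bar> + \<bar>dMt\<bar>) * exp (M - 2 * L)"
proof -
  have e1: "exp M * exp (- M - L) = exp (-L)" by (simp add: exp_diff exp_minus field_simps)
  have e2: "exp M * exp (- 2 * L) = exp (M - 2 * L)" by (simp add: exp_diff exp_minus field_simps)
  have "exp M * (- dLd * exp (- M - L) + \<sigma> * ((dL * Mt - Mt * dM - dMt) * exp (- 2 * L)))
      = - dLd * (exp M * exp (- M - L)) + \<sigma> * ((dL * Mt - Mt * dM - dMt) * (exp M * exp (- 2 * L)))"
    by (simp add: algebra_simps)
  also have "\<dots> = - dLd * exp (-L) + \<sigma> * ((dL * Mt - Mt * dM - dMt) * exp (M - 2 * L))" unfolding e1 e2 by simp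
  finally have q1: "exp M * (- dLd * exp (- M - L) + \<sigma> * ((dL * Mt - Mt * dM - dMt) * exp (- 2 * L)))
      = - dLd * exp (-L) + \<sigma> * ((dL * Mt - Mt * dM - dMt) * exp (M - 2 * L))" .
  have a1: "\<bar>- dLd * exp (-L)\<bar> = \<bar>dLd\<bar> * exp (-L)" by (simp add: abs_mult)
  have b: "\<bar>dL * Mt - Mt * dM - dMt\<bar> \<le> \<bar>dM\<bar> * \<bar>Mt\<bar> + \<bar>dL\<bar> * \<bar>Mt\<bar> + \<bar>dMt\<bar>"
  proof -
    have "\<bar>dL * Mt - Mt * dM - dMt\<bar> \<le> \<bar>dL * Mt\<bar> + \<bar>Mt * dM\<bar> + \<bar>dMt\<bar>" by linarith
    then show ?thesis by (simp add: abs_mult algebra_simps)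
  qed
  have a2: "\<bar>\<sigma> * ((dL * Mt - Mt * dM - dMt) * exp (M - 2 * L))\<bar> \<le> (\<bar>dM\<bar> * \<bar>Mt\<bar> + \<bar>dL\<bar> * \<bar>Mt\<bar> + \<bar>dMt\<bar>) * exp (M - 2 * L)"
    unfolding abs_mult s using b by (simp add: mult_right_mono)
  show ?thesis unfolding q1 using a1 a2 abs_triangle_ineq[of "- dLd * exp (-L)" "\<sigma> * ((dL * Mt - Mt * dM - dMt) * exp (M - 2 * L))"]
    by linarith
qed

lemma init_bound:
  fixes L M dM dL p p' q q' \<sigma> :: real
  assumes s: "\<bar>\<sigma>\<bar> = 1"
  shows "\<bar>exp (- L) * (exp (- M) * p' - dM * exp (- M) * p + \<sigma> * (exp (- L) * q' - dL * exp (- L) * q))\<bar>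
     \<le> (\<bar>p'\<bar> + \<bar>dM\<bar> * \<bar>p\<bar>) * exp (- M - L) + (\<bar>q'\<bar> + \<bar>dL\<bar> * \<bar>q\<bar>) * exp (- 2 * L)"
proof -
  have e1: "exp (- L) * exp (- M) = exp (- M - L)" by (simp add: exp_add[symmetric])
  have e2: "exp (- L) * exp (- L) = exp (- 2 * L)" by (simp add: exp_add[symmetric])
  have "exp (- L) * (exp (- M) * p' - dM * exp (- M) * p + \<sigma> * (exp (- L) * q' - dL * exp (- L) * q))
     = (p' - dM * p) * (exp (- L) * exp (- M)) + \<sigma> * ((q' - dL * q) * (exp (- L) * exp (- L)))"
    by (simp add: algebra_simps)
  also have "\<dots> = (p' - dM * p) * exp (- M - L) + \<sigma> * ((q' - dL * q) * exp (- 2 * L))" unfolding e1 e2 ..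
  finally have q: "exp (- L) * (exp (- M) * p' - dM * exp (- M) * p + \<sigma> * (exp (- L) * q' - dL * exp (- L) * q))
      = (p' - dM * p) * exp (- M - L) + \<sigma> * ((q' - dL * q) * exp (- 2 * L))" .
  have b1: "\<bar>p' - dM * p\<bar> \<le> \<bar>p'\<bar> + \<bar>dM\<bar> * \<bar>p\<bar>" using abs_triangle_ineq4[of p' "dM * p"] by (simp add: abs_mult)
  have b2: "\<bar>q' - dL * q\<bar> \<le> \<bar>q'\<bar> + \<bar>dL\<bar> * \<bar>q\<bar>" using abs_triangle_ineq4[of q' "dL * q"] by (simp add: abs_mult)
  have a1: "\<bar>(p' - dM * p) * exp (- M - L)\<bar> \<le> (\<bar>p'\<bar> + \<bar>dM\<bar> * \<bar>p\<bar>) * exp (- M - L)"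
    unfolding abs_mult using b1 by (simp add: mult_right_mono)
  have a2: "\<bar>\<sigma> * ((q' - dL * q) * exp (- 2 * L))\<bar> \<le> (\<bar>q'\<bar> + \<bar>dL\<bar> * \<bar>q\<bar>) * exp (- 2 * L)"
    unfolding abs_mult s using b2 by (simp add: mult_right_mono)
  show ?thesis unfolding q using a1 a2 abs_triangle_ineq[of "(p' - dM * p) * exp (- M - L)" "\<sigma> * ((q' - dL * q) * exp (- 2 * L))"]
    by linarith
qed




lemma C1_cont:
  assumes "C1_on I f"
  shows "continuous_on (I\<times>UNIV) (\<lambda>p. f (fst p) (snd p))"
    "continuous_on (I\<times>UNIV) (\<lambda>p. dtI I f (fst p) (snd p))"
    "continuous_on (I\<times>UNIV) (\<lambda>p. dr f (fst p) (snd p))"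
  using assms by (simp_all add: C1_on_def case_prod_unfold)

lemma C1_rderiv:
  assumes "C1_on I f" "t \<in> I"
  shows "(f t has_real_derivative dr f t r) (at r)"
proof -
  have "f t differentiable (at r)" using assms unfolding C1_on_def by blast
  then show ?thesis by (simp add: dr_def DERIV_deriv_iff_real_differentiable)
qed

lemma per_dr:
  assumes "periodic_r I f" "C1_on I f" shows "periodic_r I (dr f)"
  unfolding periodic_r_def dr_def
proof (intro ballI allI)
  fix t r assume t: "t \<in> I"
  have "\<forall>r. f t (r+1) = f t r" using assms(1) t by (simp add: periodic_r_def)
  moreover have "\<forall>x. f t differentiable (at x)" using assms(2) t unfolding C1_on_def by blast
  ultimately show "deriv (f t) (r + 1) = deriv (f t) r" by (rule per_deriv)
qed

lemma sup_tools:
  fixes f :: "real \<Rightarrow> real \<Rightarrow> real"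
  assumes c: "continuous_on (I\<times>UNIV) (\<lambda>(t,r). f t r)" and p: "periodic_r I f" and sub: "{a..b} \<subseteq> I"
  shows "\<And>t x. t \<in> I \<Longrightarrow> f t x \<le> (SUP r. f t r)" "continuous_on {a..b} (\<lambda>t. SUP r. f t r)"
proof -
  show "\<And>t x. t \<in> I \<Longrightarrow> f t x \<le> (SUP r. f t r)"
    using slice_sup(2)[OF c] p by (simp add: periodic_r_def)
  have c': "continuous_on ({a..b}\<times>UNIV) (\<lambda>(t,r). f t r)"
    by (rule continuous_on_subset[OF c]) (use sub in auto)
  show "continuous_on {a..b} (\<lambda>t. SUP r. f t r)"
    by (rule sup_cont[OF c']) (use p sub in \<open>auto simp: periodic_r_def\<close>)
qed

lemma abs_le_sqrt_sum: "\<bar>x::real\<bar> \<le> sqrt (x^2 + y^2)" "\<bar>y::real\<bar> \<le> sqrt (x^2 + y^2)"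
proof -
  show "\<bar>x\<bar> \<le> sqrt (x^2 + y^2)" using real_sqrt_le_mono[of "x^2" "x^2+y^2"] by simp
  show "\<bar>y\<bar> \<le> sqrt (x^2 + y^2)" using real_sqrt_le_mono[of "y^2" "x^2+y^2"] by simp
qed

lemma sqrt_le_sum_abs: "sqrt (x^2 + y^2) \<le> \<bar>x::real\<bar> + \<bar>y\<bar>"
proof -
  have "x^2 + y^2 \<le> (\<bar>x\<bar> + \<bar>y\<bar>)^2" by (simp add: power2_eq_square algebra_simps)
  then have "sqrt (x^2 + y^2) \<le> sqrt ((\<bar>x\<bar> + \<bar>y\<bar>)^2)" by (rule real_sqrt_le_mono)
  then show ?thesis by simp
qed

lemma cont_diff_all: "\<forall>x. g differentiable (at x) \<Longrightarrow> continuous_on UNIV (g::real\<Rightarrow>real)"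
  by (simp add: continuous_at_imp_continuous_on differentiable_imp_continuous_within)




theorem proposition2p5:
  fixes I :: "real set"
    and lam mu mut X Y X1 Y1 :: "real \<Rightarrow> real \<Rightarrow> real"
    and psi phi :: "real \<Rightarrow> real"
  assumes I_int: "is_interval I" and I_one: "1 \<in> I" and I_pos: "I \<subseteq> {0<..}"
    and lam_C1: "C1_on I lam" and mu_C1: "C1_on I mu" and mut_C1: "C1_on I mut"
    and lamdot_C1: "C1_on I (dtI I lam)"
    and lam_per: "periodic_r I lam" and mu_per: "periodic_r I mu" and mut_per: "periodic_r I mut"
    and psi_C1: "C1_real psi" and phi_C2: "C2_real phi"
    and psi_per: "periodic1 psi" and phi_per: "periodic1 phi"
    and a_def: "a \<equiv> (\<lambda>t r. (- dtI I lam t r - 1/t) * exp (- mu t r) - mut t r * exp (- lam t r))"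
    and b_def: "b \<equiv> (\<lambda>t r. - exp (- mu t r) / t)"
    and c_def: "c \<equiv> (\<lambda>t r. (- dtI I lam t r - 1/t) * exp (- mu t r) + mut t r * exp (- lam t r))"
    and b1_def: "b1 \<equiv> (\<lambda>t r. (- 2 * dtI I lam t r - 1/t) * exp (- mu t r)
                           - (mut t r + dr mu t r) * exp (- lam t r))"
    and b2_def: "b2 \<equiv> (\<lambda>t r. - exp (- mu t r) / t)"
    and b3_def: "b3 \<equiv> (\<lambda>t r. - dr (dtI I lam) t r * exp (- mu t r - lam t r)
           + (dr lam t r * mut t r - mut t r * dr mu t r - dr mut t r) * exp (- 2 * lam t r))"
    and b4_def: "b4 \<equiv> (\<lambda>t r. (- 2 * dtI I lam t r - 1/t) * exp (- mu t r)
                           + (mut t r + dr mu t r) * exp (- lam t r))"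
    and b5_def: "b5 \<equiv> (\<lambda>t r. - dr (dtI I lam) t r * exp (- mu t r - lam t r)
           - (dr lam t r * mut t r - mut t r * dr mu t r - dr mut t r) * exp (- 2 * lam t r))"
    and X_C1: "C1_on I X" and Y_C1: "C1_on I Y"
    and X_per: "periodic_r I X" and Y_per: "periodic_r I Y"
    and X_eq: "\<forall>t\<in>I. \<forall>r. exp (- mu t r) * dtI I X t r + exp (- lam t r) * dr X t r
                          = a t r * X t r + b t r * Y t r"
    and Y_eq: "\<forall>t\<in>I. \<forall>r. exp (- mu t r) * dtI I Y t r - exp (- lam t r) * dr Y t r
                          = b t r * X t r + c t r * Y t r"
    and X_init: "\<forall>r. X 1 r = exp (- mu 1 r) * psi r - exp (- lam 1 r) * deriv phi r"
    and Y_init: "\<forall>r. Y 1 r = exp (- mu 1 r) * psi r + exp (- lam 1 r) * deriv phi r"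
    and X1_C1: "C1_on I X1" and Y1_C1: "C1_on I Y1"
    and X1_per: "periodic_r I X1" and Y1_per: "periodic_r I Y1"
    and X1_eq: "\<forall>t\<in>I. \<forall>r. exp (- mu t r) * dtI I X1 t r + exp (- lam t r) * dr X1 t r
                          = b1 t r * X1 t r + b2 t r * Y1 t r + b3 t r * X t r"
    and Y1_eq: "\<forall>t\<in>I. \<forall>r. exp (- mu t r) * dtI I Y1 t r - exp (- lam t r) * dr Y1 t r
                          = b2 t r * X1 t r + b4 t r * Y1 t r + b5 t r * Y t r"
    and X1_init: "\<forall>r. X1 1 r = exp (- lam 1 r) * dr X 1 r"
    and Y1_init: "\<forall>r. Y1 1 r = exp (- lam 1 r) * dr Y 1 r"
    and K_def: "K \<equiv> (\<lambda>t. SUP r. sqrt ((X t r)\<^sup>2 + (Y t r)\<^sup>2))"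
    and A0_def: "A0 \<equiv> 2 * (SUP r. (\<bar>deriv psi r\<bar> + \<bar>dr mu 1 r\<bar> * \<bar>psi r\<bar>) * exp (- mu 1 r - lam 1 r)
                     + (\<bar>deriv (deriv phi) r\<bar> + \<bar>dr lam 1 r\<bar> * \<bar>deriv phi r\<bar>) * exp (- 2 * lam 1 r))"
    and A_def: "A \<equiv> (\<lambda>t. SUP r. sqrt ((X1 t r)\<^sup>2 + (Y1 t r)\<^sup>2))"
    and v_def: "v \<equiv> (\<lambda>t. SUP r. 2 / t + 2 * \<bar>dtI I lam t r\<bar>
                        + (\<bar>mut t r\<bar> + \<bar>dr mu t r\<bar>) * exp (mu t r - lam t r))"
    and h_def: "h \<equiv> (\<lambda>t. SUP r. \<bar>dr (dtI I lam) t r\<bar> * exp (- lam t r)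
        + (\<bar>dr mu t r\<bar> * \<bar>mut t r\<bar> + \<bar>dr lam t r\<bar> * \<bar>mut t r\<bar> + \<bar>dr mut t r\<bar>) * exp (mu t r - 2 * lam t r))"
  shows "\<forall>t\<in>I. (t \<le> 1 \<longrightarrow> A t \<le> A0 + 3 * integral {t..1} (\<lambda>s. v s * A s + h s * K s))
             \<and> (1 \<le> t \<longrightarrow> A t \<le> A0 + 3 * integral {1..t} (\<lambda>s. v s * A s + h s * K s))"
proof -
  note lamC = C1_cont[OF lam_C1] and muC = C1_cont[OF mu_C1] and mutC = C1_cont[OF mut_C1]
    and ldC = C1_cont[OF lamdot_C1] and XC = C1_cont[OF X_C1] and YC = C1_cont[OF Y_C1]
    and X1C = C1_cont[OF X1_C1] and Y1C = C1_cont[OF Y1_C1]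
  have pos: "\<And>p. p \<in> I \<times> (UNIV::real set) \<Longrightarrow> fst p \<noteq> 0" using I_pos by fastforce
  have pos': "\<And>t. t \<in> I \<Longrightarrow> t > 0" using I_pos by auto
  have ld_per: "periodic_r I (dtI I lam)" by (rule per_dt[OF lam_per])
  have drmu_per: "periodic_r I (dr mu)" by (rule per_dr[OF mu_per mu_C1])
  have drlam_per: "periodic_r I (dr lam)" by (rule per_dr[OF lam_per lam_C1])
  have drmut_per: "periodic_r I (dr mut)" by (rule per_dr[OF mut_per mut_C1])
  have drld_per: "periodic_r I (dr (dtI I lam))" by (rule per_dr[OF ld_per lamdot_C1])
  define Ai where "Ai = (\<lambda>t r. sqrt ((X1 t r)\<^sup>2 + (Y1 t r)\<^sup>2))"
  define Ki where "Ki = (\<lambda>t r. sqrt ((X t r)\<^sup>2 + (Y t r)\<^sup>2))"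
  define vi where "vi = (\<lambda>t r. 2 / t + 2 * \<bar>dtI I lam t r\<bar>
                        + (\<bar>mut t r\<bar> + \<bar>dr mu t r\<bar>) * exp (mu t r - lam t r))"
  define hi where "hi = (\<lambda>t r. \<bar>dr (dtI I lam) t r\<bar> * exp (- lam t r)
        + (\<bar>dr mu t r\<bar> * \<bar>mut t r\<bar> + \<bar>dr lam t r\<bar> * \<bar>mut t r\<bar> + \<bar>dr mut t r\<bar>) * exp (mu t r - 2 * lam t r))"
  have A_eq: "A = (\<lambda>t. SUP r. Ai t r)" using A_def Ai_def by simp
  have K_eq: "K = (\<lambda>t. SUP r. Ki t r)" using K_def Ki_def by simp
  have v_eq: "v = (\<lambda>t. SUP r. vi t r)" using v_def vi_def by simp
  have h_eq: "h = (\<lambda>t. SUP r. hi t r)" using h_def hi_def by simp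
  have cAi: "continuous_on (I\<times>UNIV) (\<lambda>(t,r). Ai t r)" unfolding Ai_def case_prod_unfold
    by (intro continuous_intros X1C Y1C)
  have cKi: "continuous_on (I\<times>UNIV) (\<lambda>(t,r). Ki t r)" unfolding Ki_def case_prod_unfold
    by (intro continuous_intros XC YC)
  have cvi: "continuous_on (I\<times>UNIV) (\<lambda>(t,r). vi t r)" unfolding vi_def case_prod_unfold
    by (intro continuous_intros lamC muC mutC ldC) (use pos in blast)
  have chi: "continuous_on (I\<times>UNIV) (\<lambda>(t,r). hi t r)" unfolding hi_def case_prod_unfold
    by (intro continuous_intros lamC muC mutC ldC)
  have pAi: "periodic_r I Ai" using X1_per Y1_per by (simp add: periodic_r_def Ai_def)
  have pKi: "periodic_r I Ki" using X_per Y_per by (simp add: periodic_r_def Ki_def)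
  have pvi: "periodic_r I vi" using ld_per mut_per drmu_per mu_per lam_per by (simp add: periodic_r_def vi_def)
  have phi': "periodic_r I hi" using drld_per lam_per drmu_per mut_per drlam_per drmut_per mu_per
    by (simp add: periodic_r_def hi_def)
  have Aup: "\<And>t x. t \<in> I \<Longrightarrow> Ai t x \<le> A t" unfolding A_eq using sup_tools(1)[OF cAi pAi, of 1 1] I_one by simp
  have Kup: "\<And>t x. t \<in> I \<Longrightarrow> Ki t x \<le> K t" unfolding K_eq using sup_tools(1)[OF cKi pKi, of 1 1] I_one by simp
  have vup: "\<And>t x. t \<in> I \<Longrightarrow> vi t x \<le> v t" unfolding v_eq using sup_tools(1)[OF cvi pvi, of 1 1] I_one by simp
  have hup: "\<And>t x. t \<in> I \<Longrightarrow> hi t x \<le> h t" unfolding h_eq using sup_tools(1)[OF chi phi', of 1 1] I_one by simp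
  have hX1: "\<bar>dtI I X1 \<tau> r\<bar> \<le> v \<tau> * A \<tau> + h \<tau> * K \<tau>" if t: "\<tau> \<in> I" and d0: "dr X1 \<tau> r = 0" for \<tau> r
  proof (rule bound_abs)
    show "exp (- mu \<tau> r) * dtI I X1 \<tau> r = b1 \<tau> r * X1 \<tau> r + b2 \<tau> r * Y1 \<tau> r + b3 \<tau> r * X \<tau> r"
      using X1_eq[rule_format, OF t, of r] d0 by simp
    have e1: "b1 \<tau> r = (- 2 * dtI I lam \<tau> r - 1/\<tau>) * exp (- mu \<tau> r) + (-1) * ((mut \<tau> r + dr mu \<tau> r) * exp (- lam \<tau> r))"
      by (simp add: b1_def)
    have e2: "b2 \<tau> r = - exp (- mu \<tau> r) / \<tau>" by (simp add: b2_def)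
    have "\<bar>exp (mu \<tau> r) * b1 \<tau> r\<bar> + \<bar>exp (mu \<tau> r) * b2 \<tau> r\<bar> \<le> vi \<tau> r"
      unfolding e1 e2 vi_def by (rule coef1) (use pos'[OF t] in auto)
    then show "\<bar>exp (mu \<tau> r) * b1 \<tau> r\<bar> + \<bar>exp (mu \<tau> r) * b2 \<tau> r\<bar> \<le> v \<tau>" using vup[OF t, of r] by linarith
    have e3: "b3 \<tau> r = - dr (dtI I lam) \<tau> r * exp (- mu \<tau> r - lam \<tau> r)
           + 1 * ((dr lam \<tau> r * mut \<tau> r - mut \<tau> r * dr mu \<tau> r - dr mut \<tau> r) * exp (- 2 * lam \<tau> r))"
      by (simp add: b3_def)
    have "\<bar>exp (mu \<tau> r) * b3 \<tau> r\<bar> \<le> hi \<tau> r" unfolding e3 hi_def by (rule coef3) simp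
    then show "\<bar>exp (mu \<tau> r) * b3 \<tau> r\<bar> \<le> h \<tau>" using hup[OF t, of r] by linarith
    show "\<bar>X1 \<tau> r\<bar> \<le> A \<tau>" using abs_le_sqrt_sum(1) Aup[OF t, of r] unfolding Ai_def by (meson order_trans)
    show "\<bar>Y1 \<tau> r\<bar> \<le> A \<tau>" using abs_le_sqrt_sum(2) Aup[OF t, of r] unfolding Ai_def by (meson order_trans)
    show "\<bar>X \<tau> r\<bar> \<le> K \<tau>" using abs_le_sqrt_sum(1) Kup[OF t, of r] unfolding Ki_def by (meson order_trans)
  qed
  have hY1: "\<bar>dtI I Y1 \<tau> r\<bar> \<le> v \<tau> * A \<tau> + h \<tau> * K \<tau>" if t: "\<tau> \<in> I" and d0: "dr Y1 \<tau> r = 0" for \<tau> r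
  proof (rule bound_abs)
    show "exp (- mu \<tau> r) * dtI I Y1 \<tau> r = b4 \<tau> r * Y1 \<tau> r + b2 \<tau> r * X1 \<tau> r + b5 \<tau> r * Y \<tau> r"
      using Y1_eq[rule_format, OF t, of r] d0 by (simp add: algebra_simps)
    have e1: "b4 \<tau> r = (- 2 * dtI I lam \<tau> r - 1/\<tau>) * exp (- mu \<tau> r) + 1 * ((mut \<tau> r + dr mu \<tau> r) * exp (- lam \<tau> r))"
      by (simp add: b4_def)
    have e2: "b2 \<tau> r = - exp (- mu \<tau> r) / \<tau>" by (simp add: b2_def)
    have "\<bar>exp (mu \<tau> r) * b4 \<tau> r\<bar> + \<bar>exp (mu \<tau> r) * b2 \<tau> r\<bar> \<le> vi \<tau> r"
      unfolding e1 e2 vi_def by (rule coef1) (use pos'[OF t] in auto)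
    then show "\<bar>exp (mu \<tau> r) * b4 \<tau> r\<bar> + \<bar>exp (mu \<tau> r) * b2 \<tau> r\<bar> \<le> v \<tau>" using vup[OF t, of r] by linarith
    have e3: "b5 \<tau> r = - dr (dtI I lam) \<tau> r * exp (- mu \<tau> r - lam \<tau> r)
           + (-1) * ((dr lam \<tau> r * mut \<tau> r - mut \<tau> r * dr mu \<tau> r - dr mut \<tau> r) * exp (- 2 * lam \<tau> r))"
      by (simp add: b5_def)
    have "\<bar>exp (mu \<tau> r) * b5 \<tau> r\<bar> \<le> hi \<tau> r" unfolding e3 hi_def by (rule coef3) simp
    then show "\<bar>exp (mu \<tau> r) * b5 \<tau> r\<bar> \<le> h \<tau>" using hup[OF t, of r] by linarith
    show "\<bar>Y1 \<tau> r\<bar> \<le> A \<tau>" using abs_le_sqrt_sum(2) Aup[OF t, of r] unfolding Ai_def by (meson order_trans)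
    show "\<bar>X1 \<tau> r\<bar> \<le> A \<tau>" using abs_le_sqrt_sum(1) Aup[OF t, of r] unfolding Ai_def by (meson order_trans)
    show "\<bar>Y \<tau> r\<bar> \<le> K \<tau>" using abs_le_sqrt_sum(2) Kup[OF t, of r] unfolding Ki_def by (meson order_trans)
  qed
  define Si where "Si = (\<lambda>r. (\<bar>deriv psi r\<bar> + \<bar>dr mu 1 r\<bar> * \<bar>psi r\<bar>) * exp (- mu 1 r - lam 1 r)
                     + (\<bar>deriv (deriv phi) r\<bar> + \<bar>dr lam 1 r\<bar> * \<bar>deriv phi r\<bar>) * exp (- 2 * lam 1 r))"
  have A0_eq: "A0 = 2 * (SUP r. Si r)" using A0_def Si_def by simp
  have psi_d: "\<forall>x. psi differentiable (at x)" and psi_dc: "continuous_on UNIV (deriv psi)"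
    using psi_C1 by (auto simp: C1_real_def)
  have phi_d: "\<forall>x. phi differentiable (at x)" and phi_dd: "\<forall>x. deriv phi differentiable (at x)"
    and phi_ddc: "continuous_on UNIV (deriv (deriv phi))"
    using phi_C2 by (auto simp: C2_real_def)
  have c_mu1: "continuous_on UNIV (mu 1)" using slice_cont[OF _ I_one] mu_C1 unfolding C1_on_def by blast
  have c_lam1: "continuous_on UNIV (lam 1)" using slice_cont[OF _ I_one] lam_C1 unfolding C1_on_def by blast
  have c_dmu1: "continuous_on UNIV (dr mu 1)" using slice_cont[OF _ I_one] mu_C1 unfolding C1_on_def by blast
  have c_dlam1: "continuous_on UNIV (dr lam 1)" using slice_cont[OF _ I_one] lam_C1 unfolding C1_on_def by blast
  have c_psi: "continuous_on UNIV psi" by (rule cont_diff_all[OF psi_d])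
  have c_dphi: "continuous_on UNIV (deriv phi)" by (rule cont_diff_all[OF phi_dd])
  have cSi: "continuous_on UNIV Si" unfolding Si_def
    by (intro continuous_intros c_mu1 c_lam1 c_dmu1 c_dlam1 c_psi c_dphi psi_dc phi_ddc)
  have pp: "\<forall>r. psi (r+1) = psi r" using psi_per by (simp add: periodic1_def)
  have pph: "\<forall>r. phi (r+1) = phi r" using phi_per by (simp add: periodic1_def)
  have pdpsi: "\<forall>r. deriv psi (r+1) = deriv psi r" using per_deriv[OF pp psi_d] by blast
  have pdphi: "\<forall>r. deriv phi (r+1) = deriv phi r" using per_deriv[OF pph phi_d] by blast
  have pddphi: "\<forall>r. deriv (deriv phi) (r+1) = deriv (deriv phi) r" using per_deriv[OF pdphi phi_dd] by blast
  have pSi: "\<forall>r. Si (r+1) = Si r" unfolding Si_def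
    using pp pdpsi pdphi pddphi drmu_per mu_per lam_per drlam_per I_one by (simp add: periodic_r_def)
  have bSi: "bdd_above (range Si)" by (rule per_attain(1)[OF cSi pSi])
  have dmu1: "\<And>r. (mu 1 has_real_derivative dr mu 1 r) (at r)" by (rule C1_rderiv[OF mu_C1 I_one])
  have dlam1: "\<And>r. (lam 1 has_real_derivative dr lam 1 r) (at r)" by (rule C1_rderiv[OF lam_C1 I_one])
  have dpsi: "\<And>r. (psi has_real_derivative deriv psi r) (at r)" using psi_d DERIV_deriv_iff_real_differentiable by blast
  have ddphi: "\<And>r. (deriv phi has_real_derivative deriv (deriv phi) r) (at r)" using phi_dd DERIV_deriv_iff_real_differentiable by blast
  have X1_1: "\<bar>X1 1 r\<bar> \<le> Si r" for r
  proof -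
    have X1f: "X 1 = (\<lambda>x. exp (- mu 1 x) * psi x - exp (- lam 1 x) * deriv phi x)" using X_init by auto
    have "((\<lambda>x. exp (- mu 1 x) * psi x - exp (- lam 1 x) * deriv phi x) has_real_derivative
        (exp (- mu 1 r) * deriv psi r - dr mu 1 r * exp (- mu 1 r) * psi r
          + (-1) * (exp (- lam 1 r) * deriv (deriv phi) r - dr lam 1 r * exp (- lam 1 r) * deriv phi r))) (at r)"
      by (rule derivative_eq_intros dmu1 dlam1 dpsi ddphi refl | simp add: algebra_simps)+
    then have "dr X 1 r = exp (- mu 1 r) * deriv psi r - dr mu 1 r * exp (- mu 1 r) * psi r
          + (-1) * (exp (- lam 1 r) * deriv (deriv phi) r - dr lam 1 r * exp (- lam 1 r) * deriv phi r)"
      unfolding dr_def X1f by (rule DERIV_imp_deriv)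
    then have "X1 1 r = exp (- lam 1 r) * (exp (- mu 1 r) * deriv psi r - dr mu 1 r * exp (- mu 1 r) * psi r
          + (-1) * (exp (- lam 1 r) * deriv (deriv phi) r - dr lam 1 r * exp (- lam 1 r) * deriv phi r))"
      using X1_init by simp
    then show ?thesis unfolding Si_def by (simp only: init_bound)
  qed
  have Y1_1: "\<bar>Y1 1 r\<bar> \<le> Si r" for r
  proof -
    have Y1f: "Y 1 = (\<lambda>x. exp (- mu 1 x) * psi x + exp (- lam 1 x) * deriv phi x)" using Y_init by auto
    have "((\<lambda>x. exp (- mu 1 x) * psi x + exp (- lam 1 x) * deriv phi x) has_real_derivative
        (exp (- mu 1 r) * deriv psi r - dr mu 1 r * exp (- mu 1 r) * psi r
          + 1 * (exp (- lam 1 r) * deriv (deriv phi) r - dr lam 1 r * exp (- lam 1 r) * deriv phi r))) (at r)"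
      by (rule derivative_eq_intros dmu1 dlam1 dpsi ddphi refl | simp add: algebra_simps)+
    then have "dr Y 1 r = exp (- mu 1 r) * deriv psi r - dr mu 1 r * exp (- mu 1 r) * psi r
          + 1 * (exp (- lam 1 r) * deriv (deriv phi) r - dr lam 1 r * exp (- lam 1 r) * deriv phi r)"
      unfolding dr_def Y1f by (rule DERIV_imp_deriv)
    then have "Y1 1 r = exp (- lam 1 r) * (exp (- mu 1 r) * deriv psi r - dr mu 1 r * exp (- mu 1 r) * psi r
          + 1 * (exp (- lam 1 r) * deriv (deriv phi) r - dr lam 1 r * exp (- lam 1 r) * deriv phi r))"
      using Y1_init by simp
    then show ?thesis unfolding Si_def using init_bound[of 1] by simp
  qed
  have PX1: "(SUP r. \<bar>X1 1 r\<bar>) \<le> (SUP r. Si r)"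
    using order_trans[OF X1_1 cSUP_upper[OF UNIV_I bSi]] by (intro cSUP_least) auto
  have PY1: "(SUP r. \<bar>Y1 1 r\<bar>) \<le> (SUP r. Si r)"
    using order_trans[OF Y1_1 cSUP_upper[OF UNIV_I bSi]] by (intro cSUP_least) auto
  define F where "F = (\<lambda>s. v s * A s + h s * K s)"
  have main: "A t \<le> A0 + 3 * integral {min t 1..max t 1} F" if t: "t \<in> I" for t
  proof -
    define a where "a = min t 1"
    define b where "b = max t 1"
    have ab: "a \<le> b" by (simp add: a_def b_def)
    have aI: "a \<in> I" "b \<in> I" using t I_one by (auto simp: a_def b_def min_def max_def)
    have sub: "{a..b} \<subseteq> I"
    proof
      fix x assume x: "x \<in> {a..b}"
      have "\<forall>a\<in>I. \<forall>b\<in>I. \<forall>x. a \<le> x \<and> x \<le> b \<longrightarrow> x \<in> I" using I_int unfolding is_interval_1 .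
      then have "a \<le> x \<and> x \<le> b \<longrightarrow> x \<in> I" using aI by blast
      then show "x \<in> I" using x by simp
    qed
    have cA: "continuous_on {a..b} A" unfolding A_eq by (rule sup_tools(2)[OF cAi pAi sub])
    have cK: "continuous_on {a..b} K" unfolding K_eq by (rule sup_tools(2)[OF cKi pKi sub])
    have cv: "continuous_on {a..b} v" unfolding v_eq by (rule sup_tools(2)[OF cvi pvi sub])
    have ch: "continuous_on {a..b} h" unfolding h_eq by (rule sup_tools(2)[OF chi phi' sub])
    have cF: "continuous_on {a..b} F" unfolding F_def by (intro continuous_intros cA cK cv ch)
    have X1d: "\<forall>t\<in>I. \<forall>r. (\<lambda>s. X1 s r) differentiable (at t within I) \<and> (\<lambda>x. X1 t x) differentiable (at r)"
      and X1c: "continuous_on (I \<times> UNIV) (\<lambda>(t,r). X1 t r)" using X1_C1 unfolding C1_on_def by blast+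
    have Y1d: "\<forall>t\<in>I. \<forall>r. (\<lambda>s. Y1 s r) differentiable (at t within I) \<and> (\<lambda>x. Y1 t x) differentiable (at r)"
      and Y1c: "continuous_on (I \<times> UNIV) (\<lambda>(t,r). Y1 t r)" using Y1_C1 unfolding C1_on_def by blast+
    have hDX: "\<forall>\<tau>\<in>{a..b}. \<forall>r. dr X1 \<tau> r = 0 \<longrightarrow> \<bar>dtI I X1 \<tau> r\<bar> \<le> F \<tau>"
      using hX1 sub unfolding F_def by blast
    have hDY: "\<forall>\<tau>\<in>{a..b}. \<forall>r. dr Y1 \<tau> r = 0 \<longrightarrow> \<bar>dtI I Y1 \<tau> r\<bar> \<le> F \<tau>"
      using hY1 sub unfolding F_def by blast
    note evX = sup_evol[OF ab sub X1d X1c X1_per cF hDX]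
    note evY = sup_evol[OF ab sub Y1d Y1c Y1_per cF hDY]
    have eX: "(SUP r. \<bar>X1 t r\<bar>) \<le> (SUP r. \<bar>X1 1 r\<bar>) + integral {a..b} F"
    proof (cases "t \<le> 1")
      case True then have "a = t" "b = 1" by (auto simp: a_def b_def)
      then show ?thesis using evX(1) by simp
    next
      case False then have "a = 1" "b = t" by (auto simp: a_def b_def)
      then show ?thesis using evX(2) by simp
    qed
    have eY: "(SUP r. \<bar>Y1 t r\<bar>) \<le> (SUP r. \<bar>Y1 1 r\<bar>) + integral {a..b} F"
    proof (cases "t \<le> 1")
      case True then have "a = t" "b = 1" by (auto simp: a_def b_def)
      then show ?thesis using evY(1) by simp
    next
      case False then have "a = 1" "b = t" by (auto simp: a_def b_def)
      then show ?thesis using evY(2) by simp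
    qed
    have absX: "continuous_on (I\<times>UNIV) (\<lambda>(t,r). \<bar>X1 t r\<bar>)" unfolding case_prod_unfold
      by (intro continuous_intros X1C)
    have absY: "continuous_on (I\<times>UNIV) (\<lambda>(t,r). \<bar>Y1 t r\<bar>)" unfolding case_prod_unfold
      by (intro continuous_intros Y1C)
    have pabsX: "periodic_r I (\<lambda>t r. \<bar>X1 t r\<bar>)" using X1_per by (simp add: periodic_r_def)
    have pabsY: "periodic_r I (\<lambda>t r. \<bar>Y1 t r\<bar>)" using Y1_per by (simp add: periodic_r_def)
    have uX: "\<bar>X1 t x\<bar> \<le> (SUP r. \<bar>X1 t r\<bar>)" for x using sup_tools(1)[OF absX pabsX sub t] by simp
    have uY: "\<bar>Y1 t x\<bar> \<le> (SUP r. \<bar>Y1 t r\<bar>)" for x using sup_tools(1)[OF absY pabsY sub t] by simp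
    have At: "A t \<le> (SUP r. \<bar>X1 t r\<bar>) + (SUP r. \<bar>Y1 t r\<bar>)"
      unfolding A_eq Ai_def
    proof (rule cSUP_least)
      fix x show "sqrt ((X1 t x)\<^sup>2 + (Y1 t x)\<^sup>2) \<le> (SUP r. \<bar>X1 t r\<bar>) + (SUP r. \<bar>Y1 t r\<bar>)"
        using sqrt_le_sum_abs[of "X1 t x" "Y1 t x"] uX[of x] uY[of x] by linarith
    qed simp
    have Fnn: "F s \<ge> 0" if s: "s \<in> {a..b}" for s
    proof -
      have sI: "s \<in> I" using s sub by auto
      have "0 \<le> vi s 0" using pos'[OF sI] unfolding vi_def by (intro add_nonneg_nonneg mult_nonneg_nonneg) auto
      then have "0 \<le> v s" using vup[OF sI, of 0] by linarith
      moreover have "0 \<le> hi s 0" unfolding hi_def by (intro add_nonneg_nonneg mult_nonneg_nonneg) auto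
      then have "0 \<le> h s" using hup[OF sI, of 0] by linarith
      moreover have "0 \<le> Ai s 0" unfolding Ai_def by simp
      then have "0 \<le> A s" using Aup[OF sI, of 0] by linarith
      moreover have "0 \<le> Ki s 0" unfolding Ki_def by simp
      then have "0 \<le> K s" using Kup[OF sI, of 0] by linarith
      ultimately show ?thesis unfolding F_def by simp
    qed
    have Inn: "integral {a..b} F \<ge> 0"
      by (rule integral_nonneg[OF integrable_continuous_interval[OF cF]]) (use Fnn in auto)
    have "A t \<le> (SUP r. Si r) + (SUP r. Si r) + 2 * integral {a..b} F" using At eX eY PX1 PY1 by linarith
    also have "\<dots> \<le> A0 + 3 * integral {a..b} F" unfolding A0_eq using Inn by linarith
    finally show ?thesis unfolding a_def b_def .
  qed
  show ?thesis
  proof (intro ballI conjI impI)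
    fix t assume t: "t \<in> I"
    show "A t \<le> A0 + 3 * integral {t..1} (\<lambda>s. v s * A s + h s * K s)" if "t \<le> 1"
      using main[OF t] that unfolding F_def by (simp add: min_def max_def)
    show "A t \<le> A0 + 3 * integral {1..t} (\<lambda>s. v s * A s + h s * K s)" if "1 \<le> t"
    proof -
      have "min t 1 = 1" "max t 1 = t" using that by auto
      then show ?thesis using main[OF t] unfolding F_def by simp
    qed
  qed
qed


end
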